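(* In the common-ownership game below, there is no ownership structure $\mathbf K$ and no equilibrium $(\mathbf A^*,\mathbf q^* )$ such that $\mathbf A^*\mathbf q^*=\boldsymbol\beta$ and $\mathbf q^*=\boldsymbol\gamma$.
   Context: Model: integers $n\ge2$, $m\ge2$; $\alpha>0$, $\boldsymbol\beta\in\mathbb R^m$ with $\|\boldsymbol\beta\|_2=1$, $\boldsymbol\gamma\in\mathbb R^n$ with all $\gamma_i>0$. Firm $i$ chooses a unit vector $\mathbf a_i\in\mathbb R^m$ and $q_i\ge0$; $\mathbf A=[\mathbf a_1,\dots,\mathbf a_n]$. Standalone profit: $\Pi_i=\alpha q_i\mathbf a_i^\top(\boldsymbol\beta-\sum_{j\ne i}q_j\mathbf a_j)-(1+\alpha)q_i^2+\gamma_iq_i$. An ownership structure is an $n\times n$ matrix $\mathbf K=[\kappa_{ij}]$ with nonnegative entries, $\kappa_{ii}=1$, and $(\mathbf K+\mathbf K^\top)/2$ positive semidefinite. Firm $i$ maximizes $\tilde\Pi_i=\Pi_i+\sum_{j\ne i}\kappa_{ij}\Pi_j$; an equilibrium is a profile $(\mathbf A^*,\mathbf q^* )$ in which each $(\mathbf a_i^*,q_i^* )$ maximizes $\tilde\Pi_i$ over unit $\mathbf a_i$, $q_i\ge0$ given the others' choices. *)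

theory Defs
  imports "HOL-Analysis.Analysis"
begin

text \<open>Firms are indexed by the finite type 'n (n = CARD('n)), the space of
  characteristics by the finite type 'm (m = CARD('m)).  A strategy profile
  is (a, q) where a i :: real^'m is column i of the m x n matrix A and q i is
  the quantity of firm i.\<close>

definition mat_of_cols :: "('n::finite \<Rightarrow> real^'m::finite) \<Rightarrow> real^'n^'m" where
  "mat_of_cols a = (\<chi> k j. a j $ k)"

definition profit ::
  "real \<Rightarrow> real^'m::finite \<Rightarrow> real^'n::finite \<Rightarrow> ('n \<Rightarrow> real^'m) \<Rightarrow> real^'n \<Rightarrow> 'n \<Rightarrow> real" where
  "profit \<alpha> \<beta> \<gamma> a q i =
     \<alpha> * q$i * (a i \<bullet> (\<beta> - (\<Sum>j\<in>UNIV - {i}. q$j *\<^sub>R a j)))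
     - (1 + \<alpha>) * (q$i)^2 + \<gamma>$i * q$i"

definition objective ::
  "real \<Rightarrow> real^'m::finite \<Rightarrow> real^'n::finite \<Rightarrow> real^'n^'n \<Rightarrow> ('n \<Rightarrow> real^'m) \<Rightarrow> real^'n \<Rightarrow> 'n \<Rightarrow> real" where
  "objective \<alpha> \<beta> \<gamma> K a q i =
     profit \<alpha> \<beta> \<gamma> a q i + (\<Sum>j\<in>UNIV - {i}. K$i$j * profit \<alpha> \<beta> \<gamma> a q j)"

definition psd :: "real^'n^'n \<Rightarrow> bool" where
  "psd M \<longleftrightarrow> (\<forall>x. 0 \<le> x \<bullet> (M *v x))"

definition ownership_structure :: "real^'n::finite^'n \<Rightarrow> bool" where
  "ownership_structure K \<longleftrightarrow>
     (\<forall>i j. 0 \<le> K$i$j) \<and> (\<forall>i. K$i$i = 1) \<and>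
     psd ((1/2) *\<^sub>R (K + transpose K))"

definition equilibrium ::
  "real \<Rightarrow> real^'m::finite \<Rightarrow> real^'n::finite \<Rightarrow> real^'n^'n \<Rightarrow> ('n \<Rightarrow> real^'m) \<Rightarrow> real^'n \<Rightarrow> bool" where
  "equilibrium \<alpha> \<beta> \<gamma> K a q \<longleftrightarrow>
     (\<forall>i. norm (a i) = 1 \<and> 0 \<le> q$i \<and>
        (\<forall>b t. norm b = 1 \<longrightarrow> 0 \<le> t \<longrightarrow>
           objective \<alpha> \<beta> \<gamma> K (a(i := b)) (\<chi> j. if j = i then t else q$j) i
             \<le> objective \<alpha> \<beta> \<gamma> K a q i))"

end

theory Submission
  imports Defs
begin

lemma quad_opt:
  fixes p g e :: real
  assumes "\<alpha> > 0" "g > 0"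
    and H: "\<And>t. t \<ge> 0 \<Longrightarrow> t*p - (1+\<alpha>)*t^2 \<le> g*p - (1+\<alpha>)*g^2"
  shows "p = 2*(1+\<alpha>)*g"
proof (rule ccontr)
  assume ne: "p \<noteq> 2*(1+\<alpha>)*g"
  define d where "d = p - 2*(1+\<alpha>)*g"
  have key: "\<And>e. g + e \<ge> 0 \<Longrightarrow> e*d \<le> (1+\<alpha>)*e^2"
  proof -
    fix e :: real assume "g + e \<ge> 0"
    from H[OF this] show "e*d \<le> (1+\<alpha>)*e^2"
      unfolding d_def by (simp add: power2_eq_square algebra_simps)
  qed
  show False
  proof (cases "d > 0")
    case True
    define e where "e = d/(2*(1+\<alpha>))"
    have e0: "e > 0" using True assms by (simp add: e_def)
    have "e*d \<le> (1+\<alpha>)*e^2" using key[of e] e0 assms by simp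
    hence "d \<le> (1+\<alpha>)*e" using e0 by (simp add: power2_eq_square mult_le_cancel_left_pos)
    also have "(1+\<alpha>)*e = d/2" using assms by (simp add: e_def field_simps)
    finally show False using True by simp
  next
    case False
    hence dn: "d < 0" using ne d_def by simp
    define e where "e = - min g (-d/(2*(1+\<alpha>)))"
    have e0: "e < 0" using dn assms by (simp add: e_def divide_neg_pos)
    have "g + e \<ge> 0" by (simp add: e_def)
    hence "e*d \<le> (1+\<alpha>)*e^2" using key by simp
    hence "(-e)*(-d) \<le> (-e)*((1+\<alpha>)*(-e))" by (simp add: power2_eq_square algebra_simps)
    hence "-d \<le> (1+\<alpha>)*(-e)" using e0 by (simp add: mult_le_cancel_left_pos)
    also have "(1+\<alpha>)*(-e) \<le> (1+\<alpha>)*(-d/(2*(1+\<alpha>)))"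
      using assms by (intro mult_left_mono) (auto simp: e_def)
    also have "\<dots> = -d/2" using assms by (simp add: field_simps)
    finally show False using dn by simp
  qed
qed

lemma vec_opt:
  fixes w a :: "real^'m::finite"
  assumes "\<alpha> > 0" "g > 0" "norm a = 1"
    and H: "\<And>b t. norm b = 1 \<Longrightarrow> t \<ge> 0 \<Longrightarrow>
       t*(\<alpha>*(b \<bullet> w)+g) - (1+\<alpha>)*t^2 + C \<le> g*(\<alpha>*(a \<bullet> w)+g) - (1+\<alpha>)*g^2 + C"
  shows "w = ((1+2*\<alpha>)*g/\<alpha>) *\<^sub>R a"
proof -
  define c where "c = a \<bullet> w"
  have "\<alpha>*c + g = 2*(1+\<alpha>)*g"
    by (rule quad_opt[OF assms(1,2)]) (use H[OF assms(3)] in \<open>auto simp: c_def\<close>)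
  hence cv: "c = (1+2*\<alpha>)*g/\<alpha>" using assms(1) by (simp add: field_simps)
  have c0: "c > 0" using cv assms by simp
  have bw: "\<And>b. norm b = 1 \<Longrightarrow> b \<bullet> w \<le> c"
  proof -
    fix b :: "real^'m" assume "norm b = 1"
    from H[OF this, of g] assms(2) have "g*(\<alpha>*(b \<bullet> w)) \<le> g*(\<alpha>*c)"
      by (simp add: c_def algebra_simps)
    thus "b \<bullet> w \<le> c" using assms(1,2) by (simp add: mult_le_cancel_left_pos)
  qed
  have nw: "norm w \<le> c"
  proof (cases "w = 0")
    case True then show ?thesis using c0 by simp
  next
    case False
    have "norm ((1/norm w) *\<^sub>R w) = 1" using False by simp
    from bw[OF this] have "(1/norm w) * (w \<bullet> w) \<le> c" by simp
    moreover have "w \<bullet> w = norm w * norm w" by (simp add: dot_square_norm power2_eq_square)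
    ultimately show ?thesis using False by simp
  qed
  have aa: "a \<bullet> a = 1" using assms(3) by (simp add: dot_square_norm)
  have "norm (w - c *\<^sub>R a)^2 = (w \<bullet> w) - 2*c*(a \<bullet> w) + c^2*(a \<bullet> a)"
    unfolding power2_norm_eq_inner by (simp add: inner_diff_left inner_diff_right inner_commute power2_eq_square algebra_simps)
  also have "\<dots> = norm w ^2 - c^2" using aa by (simp add: c_def power2_norm_eq_inner[symmetric] power2_eq_square)
  also have "\<dots> \<le> 0" using nw norm_ge_zero[of w] by (simp add: power_mono)
  finally have "w = c *\<^sub>R a" by simp
  thus ?thesis using cv by simp
qed

lemma sum_minus_one:
  fixes f :: "'n::finite \<Rightarrow> 'b::ab_group_add"
  shows "(\<Sum>j\<in>UNIV - {i}. f j) = (\<Sum>j\<in>UNIV. f j) - f i"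
  by (simp add: sum_diff1)

lemma profit_alt:
  "profit \<alpha> \<beta> \<gamma> a q i = \<alpha> * q$i * (a i \<bullet> (\<beta> - (\<Sum>k\<in>UNIV. q$k *\<^sub>R a k) + q$i *\<^sub>R a i))
     - (1 + \<alpha>) * (q$i)^2 + \<gamma>$i * q$i"
  unfolding profit_def sum_minus_one by (simp add: algebra_simps)

lemma mat_cols: "mat_of_cols a *v q = (\<Sum>j\<in>UNIV. q$j *\<^sub>R a j)"
  by (simp add: vec_eq_iff matrix_vector_mult_def mat_of_cols_def sum_component mult.commute)

lemma dev_sum:
  fixes a :: "'n::finite \<Rightarrow> real^'m::finite"
  shows "(\<Sum>k\<in>UNIV. (\<chi> j. if j = i then t else \<gamma>$j)$k *\<^sub>R (a(i:=b)) k) =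
     (\<Sum>k\<in>UNIV. \<gamma>$k *\<^sub>R a k) - \<gamma>$i *\<^sub>R a i + t *\<^sub>R b"
proof -
  have "(\<Sum>k\<in>UNIV. (\<chi> j. if j = i then t else \<gamma>$j)$k *\<^sub>R (a(i:=b)) k) =
     t *\<^sub>R b + (\<Sum>k\<in>UNIV-{i}. (\<chi> j. if j = i then t else \<gamma>$j)$k *\<^sub>R (a(i:=b)) k)"
    by (subst sum.remove[of UNIV i]) auto
  also have "(\<Sum>k\<in>UNIV-{i}. (\<chi> j. if j = i then t else \<gamma>$j)$k *\<^sub>R (a(i:=b)) k)
     = (\<Sum>k\<in>UNIV-{i}. \<gamma>$k *\<^sub>R a k)"
    by (rule sum.cong) auto
  finally show ?thesis by (simp add: sum_minus_one)
qed

lemma dev_formula: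
  fixes a :: "'n::finite \<Rightarrow> real^'m::finite"
  assumes S: "(\<Sum>j\<in>UNIV. \<gamma>$j *\<^sub>R a j) = \<beta>"
  shows "objective \<alpha> \<beta> \<gamma> K (a(i:=b)) (\<chi> j. if j=i then t else \<gamma>$j) i =
    t * (\<alpha> * (b \<bullet> (\<gamma>$i *\<^sub>R a i - (\<Sum>j\<in>UNIV-{i}. (K$i$j * \<gamma>$j) *\<^sub>R a j))) + \<gamma>$i)
    - (1+\<alpha>)*t^2
    + (\<Sum>j\<in>UNIV-{i}. K$i$j * (\<alpha>*\<gamma>$j*(a j \<bullet> (\<gamma>$i *\<^sub>R a i + \<gamma>$j *\<^sub>R a j)) - (1+\<alpha>)*(\<gamma>$j)^2 + \<gamma>$j*\<gamma>$j))"
proof -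
  let ?q = "(\<chi> j. if j=i then t else \<gamma>$j)"
  have DS: "\<beta> - (\<Sum>k\<in>UNIV. ?q$k *\<^sub>R (a(i:=b)) k) = \<gamma>$i *\<^sub>R a i - t *\<^sub>R b"
    unfolding dev_sum S by simp
  have Pi: "profit \<alpha> \<beta> \<gamma> (a(i:=b)) ?q i = \<alpha> * t * (b \<bullet> (\<gamma>$i *\<^sub>R a i)) - (1+\<alpha>)*t^2 + \<gamma>$i*t"
    unfolding profit_alt DS by simp
  have Pj: "K$i$j * profit \<alpha> \<beta> \<gamma> (a(i:=b)) ?q j =
      K$i$j * (\<alpha>*\<gamma>$j*(a j \<bullet> (\<gamma>$i *\<^sub>R a i + \<gamma>$j *\<^sub>R a j)) - (1+\<alpha>)*(\<gamma>$j)^2 + \<gamma>$j*\<gamma>$j)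
      - t * (\<alpha> * (b \<bullet> ((K$i$j * \<gamma>$j) *\<^sub>R a j)))" if "j \<in> UNIV - {i}" for j
  proof -
    have ji: "j \<noteq> i" using that by simp
    show ?thesis unfolding profit_alt DS using ji
      by (simp add: inner_add_right inner_diff_right inner_commute algebra_simps)
  qed
  have SS: "(\<Sum>j\<in>UNIV-{i}. K$i$j * profit \<alpha> \<beta> \<gamma> (a(i:=b)) ?q j) =
     (\<Sum>j\<in>UNIV-{i}. K$i$j * (\<alpha>*\<gamma>$j*(a j \<bullet> (\<gamma>$i *\<^sub>R a i + \<gamma>$j *\<^sub>R a j)) - (1+\<alpha>)*(\<gamma>$j)^2 + \<gamma>$j*\<gamma>$j))
     - t * (\<alpha> * (b \<bullet> (\<Sum>j\<in>UNIV-{i}. (K$i$j * \<gamma>$j) *\<^sub>R a j)))"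
    apply (subst sum.cong[OF refl Pj], assumption)
    by (simp add: sum_subtractf inner_sum_right sum_distrib_left)
  show ?thesis
    unfolding objective_def Pi SS
    by (simp add: inner_diff_right algebra_simps)
qed

lemma psd_neg_eig:
  fixes K :: "real^'n::finite^'n"
  assumes "ownership_structure K" "K *v x = c *\<^sub>R x" "c < 0"
  shows "x = 0"
proof -
  have "0 \<le> x \<bullet> ((1/2) *\<^sub>R (K + transpose K) *v x)"
    using assms(1) unfolding ownership_structure_def psd_def by blast
  also have "x \<bullet> ((1/2) *\<^sub>R (K + transpose K) *v x) = x \<bullet> (K *v x)"
    by (simp add: scaleR_matrix_vector_assoc[symmetric] matrix_vector_mult_add_rdistrib
        inner_add_right dot_lmul_matrix[symmetric] inner_commute)
  also have "\<dots> = c * (x \<bullet> x)" using assms(2) by simp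
  finally have "0 \<le> c * (x \<bullet> x)" .
  hence "x \<bullet> x \<le> 0" using assms(3) by (simp add: mult_le_0_iff zero_le_mult_iff)
  thus ?thesis by (metis inner_eq_zero_iff order_antisym inner_ge_zero)
qed

theorem corollary2:
  fixes \<alpha> :: real and \<beta> :: "real^'m::finite" and \<gamma> :: "real^'n::finite"
  assumes "CARD('n) \<ge> 2" and "CARD('m) \<ge> 2"
    and "\<alpha> > 0" and "norm \<beta> = 1" and "\<forall>i. \<gamma>$i > 0"
  shows "\<not> (\<exists>K a q. ownership_structure K \<and> equilibrium \<alpha> \<beta> \<gamma> K a q \<and>
                  mat_of_cols a *v q = \<beta> \<and> q = \<gamma>)"
proof
  assume "\<exists>K a q. ownership_structure K \<and> equilibrium \<alpha> \<beta> \<gamma> K a q \<and>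
                  mat_of_cols a *v q = \<beta> \<and> q = \<gamma>"
  then obtain K a where K: "ownership_structure K" and E: "equilibrium \<alpha> \<beta> \<gamma> K a \<gamma>"
    and S: "(\<Sum>j\<in>UNIV. \<gamma>$j *\<^sub>R a j) = \<beta>"
    by (auto simp: mat_cols)
  have na: "norm (a i) = 1" for i using E unfolding equilibrium_def by blast
  have key: "(\<Sum>j\<in>UNIV. (K$i$j * \<gamma>$j) *\<^sub>R a j) = (- \<gamma>$i / \<alpha>) *\<^sub>R a i" for i
  proof -
    define u where "u = (\<Sum>j\<in>UNIV-{i}. (K$i$j * \<gamma>$j) *\<^sub>R a j)"
    define C where "C = (\<Sum>j\<in>UNIV-{i}. K$i$j * (\<alpha>*\<gamma>$j*(a j \<bullet> (\<gamma>$i *\<^sub>R a i + \<gamma>$j *\<^sub>R a j)) - (1+\<alpha>)*(\<gamma>$j)^2 + \<gamma>$j*\<gamma>$j))"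
    have F: "objective \<alpha> \<beta> \<gamma> K (a(i:=b)) (\<chi> j. if j=i then t else \<gamma>$j) i =
      t * (\<alpha> * (b \<bullet> (\<gamma>$i *\<^sub>R a i - u)) + \<gamma>$i) - (1+\<alpha>)*t^2 + C" for b t
      unfolding u_def C_def by (rule dev_formula[OF S])
    have id1: "a(i := a i) = a" by simp
    have id2: "(\<chi> j. if j=i then \<gamma>$i else \<gamma>$j) = \<gamma>" by (simp add: vec_eq_iff)
    have F0: "objective \<alpha> \<beta> \<gamma> K a \<gamma> i =
      \<gamma>$i * (\<alpha> * (a i \<bullet> (\<gamma>$i *\<^sub>R a i - u)) + \<gamma>$i) - (1+\<alpha>)*(\<gamma>$i)^2 + C"
      using F[of "a i" "\<gamma>$i"] unfolding id1 id2 .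
    have w: "\<gamma>$i *\<^sub>R a i - u = ((1+2*\<alpha>)*\<gamma>$i/\<alpha>) *\<^sub>R a i"
    proof (rule vec_opt[OF assms(3) _ na])
      show "0 < \<gamma>$i" using assms(5) by blast
      fix b :: "real^'m" and t :: real assume bt: "norm b = 1" "0 \<le> t"
      have "objective \<alpha> \<beta> \<gamma> K (a(i:=b)) (\<chi> j. if j=i then t else \<gamma>$j) i \<le> objective \<alpha> \<beta> \<gamma> K a \<gamma> i"
        using E bt unfolding equilibrium_def by blast
      then show "t * (\<alpha> * (b \<bullet> (\<gamma>$i *\<^sub>R a i - u)) + \<gamma>$i) - (1+\<alpha>)*t^2 + C
         \<le> \<gamma>$i * (\<alpha> * (a i \<bullet> (\<gamma>$i *\<^sub>R a i - u)) + \<gamma>$i) - (1+\<alpha>)*(\<gamma>$i)^2 + C"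
        unfolding F F0 .
    qed
    have "(\<Sum>j\<in>UNIV. (K$i$j * \<gamma>$j) *\<^sub>R a j) = (K$i$i * \<gamma>$i) *\<^sub>R a i + u"
      unfolding u_def by (simp add: sum_minus_one)
    also have "K$i$i = 1" using K unfolding ownership_structure_def by blast
    also have "u = \<gamma>$i *\<^sub>R a i - ((1+2*\<alpha>)*\<gamma>$i/\<alpha>) *\<^sub>R a i" using w by (simp add: algebra_simps)
    finally show ?thesis using assms(3)
      by (simp add: scaleR_diff_left[symmetric] scaleR_add_left[symmetric] field_simps)
  qed
  obtain i0 :: 'n where True by blast
  have "a i0 = 0"
  proof (subst vec_eq_iff, intro allI)
    fix k :: 'm
    define x where "x = (\<chi> j. \<gamma>$j * (a j $ k))"
    have "K *v x = (- 1 / \<alpha>) *\<^sub>R x"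
    proof (subst vec_eq_iff, intro allI)
      fix i
      have "(K *v x)$i = (\<Sum>j\<in>UNIV. (K$i$j * \<gamma>$j) *\<^sub>R a j) $ k"
        by (simp add: matrix_vector_mult_def x_def sum_component mult.assoc)
      also have "\<dots> = ((- 1 / \<alpha>) *\<^sub>R x)$i" by (simp add: key x_def)
      finally show "(K *v x)$i = ((- 1 / \<alpha>) *\<^sub>R x)$i" .
    qed
    moreover have "- 1 / \<alpha> < 0" using assms(3) by simp
    ultimately have "x = 0" using psd_neg_eig[OF K] by blast
    hence "\<gamma>$i0 * (a i0 $ k) = 0" by (simp add: x_def vec_eq_iff)
    thus "a i0 $ k = 0$k" using assms(5) by (metis less_irrefl mult_eq_0_iff zero_index)
  qed
  thus False using na[of i0] by simp
qed
end
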